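(* In the Bloc formation mechanism with $n=2p+1$ agents, any message profile $m$ that admits a bloc also admits an effective bloc $B^*$. Moreover the effective bloc $B^*$ is unique and $B^*=\bigcap_{B\in B^m}B$, where $B^m$ is the set of all blocs in $m$.
   Context: Agents $I=\{1,\dots,n\}$, $n=2p+1$, options $A=\{a,b\}$. In the Bloc formation mechanism each agent $i$ sends $m_i=(v_i,c_i)$, with a vote $v_i\in A$ and a set $c_i$ of exactly $p$ agents other than $i$ (nominations). For $x\in A$, a set $B\subseteq I$ with $|B|\ge p+1$ is a bloc in favor of $x$ in $m$ if $v_i=x$ and $c_i\subseteq B$ for every $i\in B$. The nomination graph $G_m$ is the directed graph on vertex set $I$ with an edge $i\to j$ iff $j\in c_i$. A bloc $B$ is effective if the subgraph of $G_m$ induced by $B$ is strongly connected, i.e., for any $i,j\in B$ there is a directed path from $i$ to $j$ using only vertices of $B$. *)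

theory Defs
  imports Main
begin

datatype alt = Opt_a | Opt_b

definition agents :: "nat \<Rightarrow> nat set" where
  "agents p = {1..2*p+1}"

text \<open>A message profile is given by votes v and nominations c; each agent i
  nominates exactly p agents other than i.\<close>
definition valid_profile :: "nat \<Rightarrow> (nat \<Rightarrow> alt) \<Rightarrow> (nat \<Rightarrow> nat set) \<Rightarrow> bool" where
  "valid_profile p v c \<longleftrightarrow>
     (\<forall>i\<in>agents p. c i \<subseteq> agents p - {i} \<and> card (c i) = p)"

definition is_bloc_for :: "nat \<Rightarrow> (nat \<Rightarrow> alt) \<Rightarrow> (nat \<Rightarrow> nat set) \<Rightarrow> alt \<Rightarrow> nat set \<Rightarrow> bool" where
  "is_bloc_for p v c x B \<longleftrightarrow>
     B \<subseteq> agents p \<and> card B \<ge> p + 1 \<and> (\<forall>i\<in>B. v i = x \<and> c i \<subseteq> B)"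

definition is_bloc :: "nat \<Rightarrow> (nat \<Rightarrow> alt) \<Rightarrow> (nat \<Rightarrow> nat set) \<Rightarrow> nat set \<Rightarrow> bool" where
  "is_bloc p v c B \<longleftrightarrow> (\<exists>x. is_bloc_for p v c x B)"

definition induced_edges :: "(nat \<Rightarrow> nat set) \<Rightarrow> nat set \<Rightarrow> (nat \<times> nat) set" where
  "induced_edges c B = {(i, j). i \<in> B \<and> j \<in> B \<and> j \<in> c i}"

definition strongly_connected_on :: "(nat \<Rightarrow> nat set) \<Rightarrow> nat set \<Rightarrow> bool" where
  "strongly_connected_on c B \<longleftrightarrow>
     (\<forall>i\<in>B. \<forall>j\<in>B. (i, j) \<in> (induced_edges c B)\<^sup>*)"

definition effective_bloc :: "nat \<Rightarrow> (nat \<Rightarrow> alt) \<Rightarrow> (nat \<Rightarrow> nat set) \<Rightarrow> nat set \<Rightarrow> bool" where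
  "effective_bloc p v c B \<longleftrightarrow> is_bloc p v c B \<and> strongly_connected_on c B"

end

theory Submission
  imports Defs
begin

lemma closed_is_bloc:
  assumes vp: "valid_profile p v c" and S: "S \<subseteq> agents p" and i: "i \<in> S"
    and cl: "\<forall>j\<in>S. v j = x \<and> c j \<subseteq> S"
  shows "is_bloc p v c S"
proof -
  have fin: "finite S" using S finite_subset unfolding agents_def by auto
  have ia: "i \<in> agents p" using S i by auto
  have ci: "c i \<subseteq> agents p - {i}" "card (c i) = p" using vp ia unfolding valid_profile_def by auto
  have fc: "finite (c i)" using ci(1) finite_subset unfolding agents_def by auto
  have "i \<notin> c i" using ci(1) by auto
  then have "card (insert i (c i)) = p + 1" using ci(2) fc by simp
  moreover have "insert i (c i) \<subseteq> S" using cl i by auto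
  ultimately have "card S \<ge> p + 1" using card_mono[OF fin] by metis
  then show ?thesis unfolding is_bloc_def is_bloc_for_def using S cl by blast
qed

lemma bloc_inter:
  assumes vp: "valid_profile p v c" and b1: "is_bloc p v c B1" and b2: "is_bloc p v c B2"
  shows "is_bloc p v c (B1 \<inter> B2)"
proof -
  obtain x1 where x1: "is_bloc_for p v c x1 B1" using b1 unfolding is_bloc_def by auto
  obtain x2 where x2: "is_bloc_for p v c x2 B2" using b2 unfolding is_bloc_def by auto
  have s1: "B1 \<subseteq> agents p" and s2: "B2 \<subseteq> agents p" using x1 x2 unfolding is_bloc_for_def by auto
  have f1: "finite B1" and f2: "finite B2" using s1 s2 finite_subset unfolding agents_def by auto
  have "card (B1 \<union> B2) \<le> 2*p+1" using card_mono[of "agents p" "B1 \<union> B2"] s1 s2 unfolding agents_def by auto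
  moreover have "card (B1 \<union> B2) + card (B1 \<inter> B2) = card B1 + card B2" using card_Un_Int[OF f1 f2] by simp
  moreover have "card B1 + card B2 \<ge> 2*p+2" using x1 x2 unfolding is_bloc_for_def by auto
  ultimately have "card (B1 \<inter> B2) > 0" by linarith
  then obtain i where i: "i \<in> B1 \<inter> B2" by (metis card_gt_0_iff ex_in_conv)
  have "x1 = x2" using i x1 x2 unfolding is_bloc_for_def by auto
  then have "\<forall>j\<in>B1 \<inter> B2. v j = x1 \<and> c j \<subseteq> B1 \<inter> B2" using x1 x2 unfolding is_bloc_for_def by auto
  then show ?thesis using closed_is_bloc[OF vp _ i] s1 by blast
qed

lemma reach_in:
  assumes cl: "\<forall>j\<in>B. c j \<subseteq> B" and i: "i \<in> B"
    and r: "(i, j) \<in> {(a, b). b \<in> c a}\<^sup>*"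
  shows "(i, j) \<in> (induced_edges c B)\<^sup>* \<and> j \<in> B"
  using r
proof (induction rule: rtrancl_induct)
  case base
  then show ?case using i by auto
next
  case (step y z)
  then have "z \<in> B" "(y, z) \<in> induced_edges c B" using cl unfolding induced_edges_def by auto
  then show ?case using step by (meson rtrancl.rtrancl_into_rtrancl)
qed

theorem lemma1:
  fixes p :: nat and v :: "nat \<Rightarrow> alt" and c :: "nat \<Rightarrow> nat set"
  assumes "valid_profile p v c"
    and "\<exists>B. is_bloc p v c B"
  shows "\<exists>Bs. effective_bloc p v c Bs
           \<and> (\<forall>B. effective_bloc p v c B \<longrightarrow> B = Bs)
           \<and> Bs = \<Inter> {B. is_bloc p v c B}"
proof -
  note vp = assms(1)
  obtain B where "is_bloc p v c B" using assms(2) by auto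
  then obtain B0 where b0: "is_bloc p v c B0" and mn: "\<forall>B'. is_bloc p v c B' \<longrightarrow> card B0 \<le> card B'"
    using ex_has_least_nat[of "is_bloc p v c" B card] by auto
  obtain x where x: "is_bloc_for p v c x B0" using b0 unfolding is_bloc_def by auto
  have s0: "B0 \<subseteq> agents p" using x unfolding is_bloc_for_def by auto
  have f0: "finite B0" using s0 finite_subset unfolding agents_def by auto
  have cl: "\<forall>j\<in>B0. c j \<subseteq> B0" and vx: "\<forall>j\<in>B0. v j = x" using x unfolding is_bloc_for_def by auto
  have sub: "B0 \<subseteq> B'" if "is_bloc p v c B'" for B'
  proof -
    have bi: "is_bloc p v c (B0 \<inter> B')" using bloc_inter[OF vp b0 that] .
    have "card B0 \<le> card (B0 \<inter> B')" using mn bi by auto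
    then have "B0 \<inter> B' = B0" using card_subset_eq[OF f0, of "B0 \<inter> B'"] card_mono[OF f0, of "B0 \<inter> B'"] by auto
    then show ?thesis by auto
  qed
  have inter: "B0 = \<Inter> {B. is_bloc p v c B}" using sub b0 by blast
  have "card B0 \<ge> 1" using x unfolding is_bloc_for_def by auto
  then obtain i0 where i0: "i0 \<in> B0" by (metis card.empty ex_in_conv not_one_le_zero)
  have sc: "strongly_connected_on c B0"
    unfolding strongly_connected_on_def
  proof (intro ballI)
    fix i j assume i: "i \<in> B0" and j: "j \<in> B0"
    define R where "R = {k. (i, k) \<in> {(a, b). b \<in> c a}\<^sup>*}"
    have RB: "R \<subseteq> B0" using reach_in[OF cl i] unfolding R_def by auto
    have "\<forall>k\<in>R. v k = x \<and> c k \<subseteq> R"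
    proof
      fix k assume k: "k \<in> R"
      have "c k \<subseteq> R" unfolding R_def using k unfolding R_def
        by (auto intro: rtrancl_into_rtrancl)
      then show "v k = x \<and> c k \<subseteq> R" using vx RB k by auto
    qed
    moreover have "i \<in> R" unfolding R_def by auto
    ultimately have "is_bloc p v c R" using closed_is_bloc[OF vp _ _] RB s0 by (meson order_trans)
    then have "j \<in> R" using sub j by auto
    then show "(i, j) \<in> (induced_edges c B0)\<^sup>*" using reach_in[OF cl i] unfolding R_def by auto
  qed
  have uniq: "B = B0" if eb: "effective_bloc p v c B" for B
  proof -
    have bb: "is_bloc p v c B" and scB: "strongly_connected_on c B" using eb unfolding effective_bloc_def by auto
    have "B0 \<subseteq> B" using sub bb .
    moreover have "B \<subseteq> B0"
    proof
      fix j assume j: "j \<in> B"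
      have "(i0, j) \<in> (induced_edges c B)\<^sup>*" using scB j i0 \<open>B0 \<subseteq> B\<close> unfolding strongly_connected_on_def by auto
      moreover have "induced_edges c B \<subseteq> {(a, b). b \<in> c a}" unfolding induced_edges_def by auto
      ultimately have "(i0, j) \<in> {(a, b). b \<in> c a}\<^sup>*" using rtrancl_mono by blast
      then show "j \<in> B0" using reach_in[OF cl i0] by auto
    qed
    ultimately show ?thesis by auto
  qed
  show ?thesis using b0 sc uniq inter unfolding effective_bloc_def by blast
qed

end
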